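(* Every $\mathbb{G}$-predictable process $Y$ satisfies the global optional splitting formula at $\tau$ with respect to $\mathbb{F}$, i.e. there exist $Y'\in\mathcal{O}(\mathbb{F})$ and a $\mathcal{B}[0,\infty]\otimes\mathcal{O}(\mathbb{F})$-measurable function $Y''$ on $[0,\infty]\times(\mathbb{R}_+\times\Omega)$ with $Y=Y'\mathbf{1}_{[0,\tau)}+Y''(\tau)\mathbf{1}_{[\tau,\infty)}$.
   Context: Let $(\Omega,\mathcal{A},\mathbb{Q})$ be a probability space with a right-continuous filtration $\mathbb{F}=(\mathcal{F}_t)_{t\ge0}$ such that $\mathcal{F}_0$ contains $\mathcal{N}^{\mathcal{F}_\infty}$, where for a $\sigma$-algebra $\mathcal{T}\subset\mathcal{A}$, $\mathcal{N}^{\mathcal{T}}$ denotes the $\sigma$-algebra generated by all subsets of $\mathcal{T}$-measurable $\mathbb{Q}$-null sets. Let $\tau$ be a random variable with values in $[0,\infty]$, let $\mathcal{N}=\mathcal{N}^{\sigma(\tau)\vee\mathcal{F}_\infty}$, and let $\mathbb{G}=(\mathcal{G}_t)_{t\ge0}$ with $\mathcal{G}_t=\mathcal{N}\vee\bigcap_{s>t}(\mathcal{F}_s\vee\sigma(\tau\wedge s))$. Identities between processes are understood up to indistinguishability outside an $\mathcal{N}$-measurable $\mathbb{Q}$-null set. $Y''(\tau)$ denotes the process $(t,\omega)\mapsto Y''(\tau(\omega),t,\omega)$. *)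

theory Defs
  imports "HOL-Probability.Probability"
begin

text \<open>Time is [0,\<infinity>) as nonnegative reals; processes are functions real => 'a => real,
  considered on the domain {0..} \<times> \<Omega>.\<close>

definition proc_dom :: "'a measure \<Rightarrow> (real \<times> 'a) set" where
  "proc_dom M = {0..} \<times> space M"

definition filtration :: "'a measure \<Rightarrow> (real \<Rightarrow> 'a set set) \<Rightarrow> bool" where
  "filtration M F \<longleftrightarrow>
     (\<forall>t\<ge>0. sigma_algebra (space M) (F t) \<and> F t \<subseteq> sets M) \<and>
     (\<forall>s t. 0 \<le> s \<longrightarrow> s \<le> t \<longrightarrow> F s \<subseteq> F t)"

definition right_continuous_filtration :: "(real \<Rightarrow> 'a set set) \<Rightarrow> bool" where
  "right_continuous_filtration F \<longleftrightarrow> (\<forall>t\<ge>0. F t = (\<Inter>s\<in>{t<..}. F s))"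

definition filt_infty :: "'a measure \<Rightarrow> (real \<Rightarrow> 'a set set) \<Rightarrow> 'a set set" where
  "filt_infty M F = sigma_sets (space M) (\<Union>t\<in>{0..}. F t)"

definition null_sigma :: "'a measure \<Rightarrow> 'a set set \<Rightarrow> 'a set set" where
  "null_sigma M T = sigma_sets (space M) {A. \<exists>B\<in>T. B \<in> sets M \<and> measure M B = 0 \<and> A \<subseteq> B}"

definition sjoin :: "'a measure \<Rightarrow> 'a set set \<Rightarrow> 'a set set \<Rightarrow> 'a set set" where
  "sjoin M A B = sigma_sets (space M) (A \<union> B)"

definition sigma_rv :: "'a measure \<Rightarrow> ('a \<Rightarrow> ereal) \<Rightarrow> 'a set set" where
  "sigma_rv M X = {X -` B \<inter> space M | B. B \<in> sets (borel :: ereal measure)}"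

definition N_tau :: "'a measure \<Rightarrow> (real \<Rightarrow> 'a set set) \<Rightarrow> ('a \<Rightarrow> ereal) \<Rightarrow> 'a set set" where
  "N_tau M F \<tau> = null_sigma M (sjoin M (sigma_rv M \<tau>) (filt_infty M F))"

definition G_filt :: "'a measure \<Rightarrow> (real \<Rightarrow> 'a set set) \<Rightarrow> ('a \<Rightarrow> ereal) \<Rightarrow> real \<Rightarrow> 'a set set" where
  "G_filt M F \<tau> t = sjoin M (N_tau M F \<tau>)
      (\<Inter>s\<in>{t<..}. sjoin M (F s) (sigma_rv M (\<lambda>\<omega>. min (\<tau> \<omega>) (ereal s))))"

definition adapted :: "'a measure \<Rightarrow> (real \<Rightarrow> 'a set set) \<Rightarrow> (real \<Rightarrow> 'a \<Rightarrow> real) \<Rightarrow> bool" where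
  "adapted M F X \<longleftrightarrow> (\<forall>t\<ge>0. \<forall>B\<in>sets (borel :: real measure). {\<omega>\<in>space M. X t \<omega> \<in> B} \<in> F t)"

definition cadlag_paths :: "'a measure \<Rightarrow> (real \<Rightarrow> 'a \<Rightarrow> real) \<Rightarrow> bool" where
  "cadlag_paths M X \<longleftrightarrow> (\<forall>\<omega>\<in>space M. \<forall>t\<ge>0.
      continuous (at_right t) (\<lambda>s. X s \<omega>) \<and>
      (t > 0 \<longrightarrow> (\<exists>l. ((\<lambda>s. X s \<omega>) \<longlongrightarrow> l) (at_left t))))"

definition left_cont_paths :: "'a measure \<Rightarrow> (real \<Rightarrow> 'a \<Rightarrow> real) \<Rightarrow> bool" where
  "left_cont_paths M X \<longleftrightarrow> (\<forall>\<omega>\<in>space M. \<forall>t>0. continuous (at_left t) (\<lambda>s. X s \<omega>))"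

definition proc_sigma :: "'a measure \<Rightarrow> (real \<Rightarrow> 'a \<Rightarrow> real) set \<Rightarrow> (real \<times> 'a) set set" where
  "proc_sigma M S = sigma_sets (proc_dom M)
     {{p\<in>proc_dom M. X (fst p) (snd p) \<in> B} | X B. X \<in> S \<and> B \<in> sets (borel :: real measure)}"

definition optional_sigma :: "'a measure \<Rightarrow> (real \<Rightarrow> 'a set set) \<Rightarrow> (real \<times> 'a) set set" where
  "optional_sigma M F = proc_sigma M {X. adapted M F X \<and> cadlag_paths M X}"

definition predictable_sigma :: "'a measure \<Rightarrow> (real \<Rightarrow> 'a set set) \<Rightarrow> (real \<times> 'a) set set" where
  "predictable_sigma M F = proc_sigma M {X. adapted M F X \<and> left_cont_paths M X}"

definition proc_measurable :: "'a measure \<Rightarrow> (real \<times> 'a) set set \<Rightarrow> (real \<Rightarrow> 'a \<Rightarrow> real) \<Rightarrow> bool" where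
  "proc_measurable M \<Sigma> X \<longleftrightarrow>
     (\<forall>B\<in>sets (borel :: real measure). {p\<in>proc_dom M. X (fst p) (snd p) \<in> B} \<in> \<Sigma>)"

definition borel_opt_sigma :: "'a measure \<Rightarrow> (real \<Rightarrow> 'a set set) \<Rightarrow> (ereal \<times> (real \<times> 'a)) set set" where
  "borel_opt_sigma M F = sigma_sets ({0..} \<times> proc_dom M)
     {(A \<inter> {0..}) \<times> C | A C. A \<in> sets (borel :: ereal measure) \<and> C \<in> optional_sigma M F}"

definition param_measurable :: "'a measure \<Rightarrow> (real \<Rightarrow> 'a set set) \<Rightarrow> (ereal \<Rightarrow> real \<Rightarrow> 'a \<Rightarrow> real) \<Rightarrow> bool" where
  "param_measurable M F Y \<longleftrightarrow>
     (\<forall>B\<in>sets (borel :: real measure).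
        {q\<in>{0..} \<times> proc_dom M. Y (fst q) (fst (snd q)) (snd (snd q)) \<in> B} \<in> borel_opt_sigma M F)"

end

theory Submission
  imports Defs
begin


locale setting =
  fixes M :: "'a measure" and F :: "real \<Rightarrow> 'a set set" and \<tau> :: "'a \<Rightarrow> ereal"
  assumes prob: "prob_space M" and filt: "filtration M F"
    and rc: "right_continuous_filtration F"
    and taum: "\<tau> \<in> borel_measurable M"
    and taupos: "\<forall>\<omega>\<in>space M. 0 \<le> \<tau> \<omega>"
begin

lemma Fsa: "0 \<le> t \<Longrightarrow> sigma_algebra (space M) (F t)"
  using filt unfolding filtration_def by auto
lemma Fsub: "0 \<le> t \<Longrightarrow> F t \<subseteq> sets M"
  using filt unfolding filtration_def by auto
lemma Fmono: "0 \<le> s \<Longrightarrow> s \<le> t \<Longrightarrow> F s \<subseteq> F t"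
  using filt unfolding filtration_def by auto
lemma Fpow: "0 \<le> t \<Longrightarrow> F t \<subseteq> Pow (space M)"
  using Fsub sets.sets_into_space by blast
lemma Fsp: "0 \<le> t \<Longrightarrow> space M \<in> F t"
proof -
  assume "0 \<le> t"
  then have "{} \<in> F t" "\<forall>s\<in>F t. space M - s \<in> F t" using Fsa[of t] unfolding sigma_algebra_iff2 by auto
  then show ?thesis by force
qed

definition "Tset = sjoin M (sigma_rv M \<tau>) (filt_infty M F)"
definition "nullT B \<longleftrightarrow> B \<in> Tset \<and> B \<in> sets M \<and> emeasure M B = 0"
definition "gnull Z \<longleftrightarrow> (\<exists>B. nullT B \<and> Z \<subseteq> B)"

lemma gnull_empty: "gnull {}"
  unfolding gnull_def nullT_def Tset_def sjoin_def by (auto intro: sigma_sets.Empty)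

lemma gnull_subset: "gnull Z \<Longrightarrow> W \<subseteq> Z \<Longrightarrow> gnull W"
  unfolding gnull_def by blast

lemma gnull_UN: assumes "\<And>i::nat. gnull (Z i)" shows "gnull (\<Union>i. Z i)"
proof -
  from assms obtain B where B: "\<And>i. nullT (B i) \<and> Z i \<subseteq> B i"
    unfolding gnull_def by metis
  have "(\<Union>i. B i) \<in> Tset" using B unfolding nullT_def Tset_def sjoin_def
    by (auto intro: sigma_sets.Union)
  moreover have "(\<Union>i. B i) \<in> sets M" using B unfolding nullT_def by auto
  moreover have "emeasure M (\<Union>i. B i) = 0"
    using B unfolding nullT_def by (intro emeasure_UN_eq_0) auto
  ultimately show ?thesis unfolding gnull_def nullT_def using B by blast
qed

lemma gnull_Un: assumes "gnull A" "gnull B" shows "gnull (A \<union> B)"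
proof -
  have e: "A \<union> B = (\<Union>i::nat. if i = 0 then A else B)" by auto
  have "gnull (\<Union>i::nat. if i = 0 then A else B)" by (rule gnull_UN) (simp add: assms)
  then show ?thesis by (simp only: e)
qed

lemma gnull_finite_UN: "finite R \<Longrightarrow> (\<And>x. x \<in> R \<Longrightarrow> gnull (Z x)) \<Longrightarrow> gnull (\<Union>x\<in>R. Z x)"
  by (induction R rule: finite_induct) (auto intro: gnull_Un gnull_empty)

lemma gnull_final: "gnull Z \<Longrightarrow> Z \<in> N_tau M F \<tau> \<and> (\<exists>B\<in>sets M. measure M B = 0 \<and> Z \<subseteq> B)"
proof -
  assume "gnull Z"
  then obtain B where B: "B \<in> Tset" "B \<in> sets M" "emeasure M B = 0" "Z \<subseteq> B"
    unfolding gnull_def nullT_def by blast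
  have m: "measure M B = 0" using B(3) by (simp add: measure_def)
  have "Z \<in> N_tau M F \<tau>" unfolding N_tau_def null_sigma_def
    apply (rule sigma_sets.Basic) using B m unfolding Tset_def by blast
  then show ?thesis using B m by blast
qed

lemma N_gen_gnull: "B \<in> Tset \<Longrightarrow> B \<in> sets M \<Longrightarrow> measure M B = 0 \<Longrightarrow> A \<subseteq> B \<Longrightarrow> gnull A"
proof -
  assume a: "B \<in> Tset" "B \<in> sets M" "measure M B = 0" "A \<subseteq> B"
  have "emeasure M B = 0"
    using finite_measure.emeasure_eq_measure[OF prob_space.finite_measure[OF prob], of B] a(3) by simp
  then show ?thesis unfolding gnull_def nullT_def using a by blast
qed

definition "Kset a = (\<Inter>s\<in>{a<..}. sjoin M (F s) (sigma_rv M (\<lambda>\<omega>. min (\<tau> \<omega>) (ereal s))))"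

definition "approxK a E \<longleftrightarrow> (\<exists>E0\<in>Kset a. gnull ((E - E0) \<union> (E0 - E)))"

lemma approxK_empty: "approxK a {}"
   unfolding approxK_def Kset_def sjoin_def
    by (rule bexI[of _ "{}"]) (auto intro: sigma_sets.Empty gnull_empty)

lemma approxK_compl: "approxK a E \<Longrightarrow> approxK a (space M - E)"
proof -
  assume "approxK a E"
  then obtain E0 where E0: "E0 \<in> Kset a" "gnull ((E - E0) \<union> (E0 - E))"
    unfolding approxK_def by blast
  have "space M - E0 \<in> Kset a" using E0(1) unfolding Kset_def sjoin_def
    by (auto intro: sigma_sets.Compl)
  moreover have "gnull (((space M - E) - (space M - E0)) \<union> ((space M - E0) - (space M - E)))"
    by (rule gnull_subset[OF E0(2)]) auto
  ultimately show "approxK a (space M - E)" unfolding approxK_def by blast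
qed

lemma approxK_UN: "(\<And>i::nat. approxK a (E i)) \<Longrightarrow> approxK a (\<Union>i. E i)"
proof -
  assume "\<And>i::nat. approxK a (E i)"
  then obtain E0 where E0: "\<And>i. E0 i \<in> Kset a" "\<And>i. gnull ((E i - E0 i) \<union> (E0 i - E i))"
    unfolding approxK_def by metis
  have "(\<Union>i. E0 i) \<in> Kset a" using E0(1) unfolding Kset_def sjoin_def
    by (auto intro: sigma_sets.Union)
  moreover have "gnull (((\<Union>i. E i) - (\<Union>i. E0 i)) \<union> ((\<Union>i. E0 i) - (\<Union>i. E i)))"
    by (rule gnull_subset[OF gnull_UN[OF E0(2)]]) auto
  ultimately show "approxK a (\<Union>i. E i)" unfolding approxK_def by blast
qed

lemma approxK_sigma: assumes "E \<in> sigma_sets (space M) S" "\<And>E. E \<in> S \<Longrightarrow> approxK a E"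
  shows "approxK a E"
  using assms(1)
proof induction
  case (Basic a) then show ?case using assms(2) by blast
next
  case Empty then show ?case by (rule approxK_empty)
next
  case (Compl x) then show ?case using approxK_compl by blast
next
  case (Union x) then show ?case using approxK_UN by blast
qed

lemma approxK_N: "E \<in> N_tau M F \<tau> \<Longrightarrow> approxK a E"
  unfolding N_tau_def null_sigma_def
  apply (erule approxK_sigma)
proof -
      fix A assume "A \<in> {A. \<exists>B\<in>sjoin M (sigma_rv M \<tau>) (filt_infty M F). B \<in> sets M \<and> measure M B = 0 \<and> A \<subseteq> B}"
      then obtain B where "B \<in> Tset" "B \<in> sets M" "measure M B = 0" "A \<subseteq> B" unfolding Tset_def by auto
      then have "gnull A" by (rule N_gen_gnull)
      have "{} \<in> Kset a" unfolding Kset_def sjoin_def by (auto intro: sigma_sets.Empty)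
      moreover have "gnull ((A - {}) \<union> ({} - A))" using \<open>gnull A\<close> by simp
      ultimately show "approxK a A" unfolding approxK_def by blast
qed

lemma approxK_G: "E \<in> G_filt M F \<tau> a \<Longrightarrow> approxK a E"
  unfolding G_filt_def sjoin_def
proof (erule approxK_sigma)
  fix E assume "E \<in> N_tau M F \<tau> \<union> (\<Inter>s\<in>{a<..}. sigma_sets (space M) (F s \<union> sigma_rv M (\<lambda>\<omega>. min (\<tau> \<omega>) (ereal s))))"
  then show "approxK a E"
  proof
    assume "E \<in> N_tau M F \<tau>"
    then show ?thesis by (rule approxK_N)
  next
    assume "E \<in> (\<Inter>s\<in>{a<..}. sigma_sets (space M) (F s \<union> sigma_rv M (\<lambda>\<omega>. min (\<tau> \<omega>) (ereal s))))"
    then have "E \<in> Kset a" unfolding Kset_def sjoin_def by simp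
    then show ?thesis unfolding approxK_def by (auto intro!: bexI[of _ E] gnull_empty)
  qed
qed

end

context setting begin

lemma Fempty: "0 \<le> t \<Longrightarrow> {} \<in> F t"
proof - assume "0 \<le> t" then interpret sigma_algebra "space M" "F t" by (rule Fsa) show ?thesis by simp qed
lemma Fcompl: "0 \<le> t \<Longrightarrow> A \<in> F t \<Longrightarrow> space M - A \<in> F t"
proof - assume "0 \<le> t" "A \<in> F t" then interpret sigma_algebra "space M" "F t" by (simp add: Fsa) show ?thesis using \<open>A \<in> F t\<close> by (rule compl_sets) qed
lemma FUN: "0 \<le> t \<Longrightarrow> (\<And>i::nat. A i \<in> F t) \<Longrightarrow> (\<Union>i. A i) \<in> F t"
proof - assume "0 \<le> t" "\<And>i::nat. A i \<in> F t" then interpret sigma_algebra "space M" "F t" by (simp add: Fsa)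
  show ?thesis using \<open>\<And>i::nat. A i \<in> F t\<close> by (intro countable_nat_UN) auto qed
lemma UNIV_borel: "UNIV \<in> sets (borel::'b::topological_space measure)"
  by (metis sets.top space_borel)

definition "BF s = sigma_sets (UNIV \<times> space M) {U \<times> G | U G. U \<in> sets (borel::ereal measure) \<and> G \<in> F s}"

lemma BF_UNIV: "0 \<le> s \<Longrightarrow> UNIV \<times> space M \<in> BF s"
  unfolding BF_def by (rule sigma_sets.Basic) (blast intro: Fsp UNIV_borel)

lemma DD:
  assumes s: "0 \<le> s" and E: "E \<in> sjoin M (F s) (sigma_rv M (\<lambda>\<omega>. min (\<tau> \<omega>) (ereal s)))"
  shows "\<exists>H\<in>BF s. E = {\<omega>\<in>space M. (min (\<tau> \<omega>) (ereal s), \<omega>) \<in> H}"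
  using E unfolding sjoin_def
proof induction
  case (Basic E)
  then show ?case
  proof
    assume "E \<in> F s"
    then have "UNIV \<times> E \<in> BF s" unfolding BF_def by (intro sigma_sets.Basic) (blast intro: UNIV_borel)
    moreover have "E \<subseteq> space M" using Fpow[OF s] \<open>E \<in> F s\<close> by auto
    ultimately show ?thesis by (intro bexI[of _ "UNIV \<times> E"]) auto
  next
    assume "E \<in> sigma_rv M (\<lambda>\<omega>. min (\<tau> \<omega>) (ereal s))"
    then obtain B where B: "B \<in> sets borel" "E = (\<lambda>\<omega>. min (\<tau> \<omega>) (ereal s)) -` B \<inter> space M"
      unfolding sigma_rv_def by auto
    have "B \<times> space M \<in> BF s" unfolding BF_def using B Fsp[OF s] by (intro sigma_sets.Basic) auto
    then show ?thesis using B by (intro bexI[of _ "B \<times> space M"]) auto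
  qed
next
  case Empty
  show ?case by (rule bexI[of _ "{}"]) (auto simp: BF_def intro: sigma_sets.Empty)
next
  case (Compl E)
  then obtain H where H: "H \<in> BF s" "E = {\<omega>\<in>space M. (min (\<tau> \<omega>) (ereal s), \<omega>) \<in> H}" by blast
  have "UNIV \<times> space M - H \<in> BF s" using H(1) unfolding BF_def by (rule sigma_sets.Compl)
  then show ?case using H(2) by (intro bexI[of _ "UNIV \<times> space M - H"]) auto
next
  case (Union E)
  from Union.IH have "\<forall>i. \<exists>H. H \<in> BF s \<and> E i = {\<omega>\<in>space M. (min (\<tau> \<omega>) (ereal s), \<omega>) \<in> H}" by blast
  then obtain H where H0: "\<forall>i. H i \<in> BF s \<and> E i = {\<omega>\<in>space M. (min (\<tau> \<omega>) (ereal s), \<omega>) \<in> H i}"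
    using choice[of "\<lambda>i H. H \<in> BF s \<and> E i = {\<omega>\<in>space M. (min (\<tau> \<omega>) (ereal s), \<omega>) \<in> H}"] by blast
  then have H: "\<And>i. H i \<in> BF s" "\<And>i. E i = {\<omega>\<in>space M. (min (\<tau> \<omega>) (ereal s), \<omega>) \<in> H i}" by auto
  have "(\<Union>i. H i) \<in> BF s" using H(1) unfolding BF_def by (intro sigma_sets.Union) auto
  moreover have "(\<Union>i. E i) = {\<omega>\<in>space M. (min (\<tau> \<omega>) (ereal s), \<omega>) \<in> (\<Union>i. H i)}"
    unfolding H(2) by blast
  ultimately show ?case by blast
qed

lemma section_BF:
  assumes s: "0 \<le> s" and H: "H \<in> BF s"
  shows "{\<omega>\<in>space M. (u, \<omega>) \<in> H} \<in> F s"
  using H unfolding BF_def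
proof induction
  case (Basic H)
  then obtain U G where UG: "H = U \<times> G" "G \<in> F s" by auto
  have "G \<subseteq> space M" using Fpow[OF s] UG by auto
  then have "{\<omega>\<in>space M. (u, \<omega>) \<in> H} = (if u \<in> U then G else {})" using UG by auto
  then show ?case using UG Fempty[OF s] by simp
next
  case Empty
  then show ?case using Fempty[OF s] by simp
next
  case (Compl H)
  have "{\<omega>\<in>space M. (u, \<omega>) \<in> UNIV \<times> space M - H} = space M - {\<omega>\<in>space M. (u, \<omega>) \<in> H}" by auto
  then show ?case using Compl Fcompl[OF s] by simp
next
  case (Union H)
  have "{\<omega>\<in>space M. (u, \<omega>) \<in> (\<Union>i. H i)} = (\<Union>i. {\<omega>\<in>space M. (u, \<omega>) \<in> H i})" by auto
  then show ?case using Union FUN[OF s] by auto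
qed

lemma liminf_F:
  assumes a: "0 \<le> a" and S: "\<And>n. S n \<in> F (a + 1 / Suc n)"
  shows "(\<Union>m. \<Inter>n. S (n + m)) \<in> F a"
proof -
  have "(\<Union>m. \<Inter>n. S (n + m)) \<in> F s" if "a < s" for s
  proof -
    obtain k :: nat where k: "1 / Suc k < s - a"
    proof -
      have "0 < s - a" using \<open>a < s\<close> by simp
      from reals_Archimedean[OF this] obtain k where "inverse (real (Suc k)) < s - a" by blast
      then show ?thesis using that by (simp add: inverse_eq_divide)
    qed
    have s0: "0 \<le> s" using a that by simp
    have eq: "(\<Union>m. \<Inter>n. S (n + m)) = (\<Union>m. \<Inter>n. S (n + (m + k)))"
    proof
      show "(\<Union>m. \<Inter>n. S (n + m)) \<subseteq> (\<Union>m. \<Inter>n. S (n + (m + k)))"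
      proof
        fix x assume "x \<in> (\<Union>m. \<Inter>n. S (n + m))"
        then obtain m where "\<forall>n. x \<in> S (n + m)" by auto
        have "\<forall>n. x \<in> S (n + (m + k))"
        proof
          fix n have "x \<in> S ((n + k) + m)" using \<open>\<forall>n. x \<in> S (n + m)\<close> by blast
          then show "x \<in> S (n + (m + k))" by (simp add: ac_simps)
        qed
        then show "x \<in> (\<Union>m. \<Inter>n. S (n + (m + k)))" by auto
      qed
    next
      show "(\<Union>m. \<Inter>n. S (n + (m + k))) \<subseteq> (\<Union>m. \<Inter>n. S (n + m))" by auto
    qed
    have "(\<Inter>n. S (n + (m + k))) \<in> F s" for m
    proof -
      have le: "a + 1 / Suc (n + (m + k)) \<le> s" for n
      proof -
        have "1 / real (Suc (n + (m + k))) \<le> 1 / Suc k" by (intro divide_left_mono) auto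
        then show ?thesis using k by linarith
      qed
      have "S (n + (m + k)) \<in> F s" for n
        using S[of "n + (m + k)"] Fmono[OF _ le[of n]] a by (simp add: subset_iff)
      then have "(\<lambda>n. S (n + (m + k))) ` UNIV \<subseteq> F s" by blast
      from sigma_algebra.countable_INT[OF Fsa[OF s0] this] show ?thesis by simp
    qed
    then show ?thesis unfolding eq using FUN[OF s0] by auto
  qed
  moreover have rcA: "\<forall>t\<ge>0. F t = (\<Inter>s\<in>{t<..}. F s)" using rc unfolding right_continuous_filtration_def .
  have eqFa: "F a = (\<Inter>s\<in>{a<..}. F s)" by (rule mp[OF spec[OF rcA] a])
  ultimately show ?thesis by (subst eqFa) blast
qed

end

context setting begin

definition "sn a (n::nat) = a + 1 / real (Suc n)"

lemma sn_gt: "a < sn a n" unfolding sn_def by simp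
lemma sn_ge0: "0 \<le> a \<Longrightarrow> 0 \<le> sn a n" using sn_gt[of a n] by simp
lemma sn_mono: "m \<le> n \<Longrightarrow> sn a n \<le> sn a m"
  unfolding sn_def by (simp add: frac_le)

lemma sn_eventually:
  assumes "ereal a < x" shows "\<exists>m. \<forall>n\<ge>m. ereal (sn a n) \<le> x"
proof (cases x)
  case (real r)
  then have "0 < r - a" using assms by simp
  from reals_Archimedean[OF this] obtain m where "inverse (real (Suc m)) < r - a" by blast
  then have "sn a m \<le> r" unfolding sn_def by (simp add: inverse_eq_divide)
  then show ?thesis using sn_mono real by (metis ereal_less_eq(3) order_trans)
next
  case PInf then show ?thesis by simp
next
  case MInf then show ?thesis using assms by simp
qed

lemma sn_below: "a < t \<Longrightarrow> \<exists>n. sn a n < t"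
proof -
  assume "a < t"
  then have "0 < t - a" by simp
  from reals_Archimedean[OF this] obtain m where "inverse (real (Suc m)) < t - a" by blast
  then show ?thesis unfolding sn_def by (intro exI[of _ m]) (simp add: inverse_eq_divide)
qed

lemma jeulin:
  assumes a: "0 \<le> a" and E: "E \<in> G_filt M F \<tau> a"
  obtains E0 H where "gnull ((E - E0) \<union> (E0 - E))"
    "\<And>n. H n \<in> BF (sn a n)"
    "\<And>n. E0 = {\<omega>\<in>space M. (min (\<tau> \<omega>) (ereal (sn a n)), \<omega>) \<in> H n}"
proof -
  from approxK_G[OF E] obtain E0 where E0: "E0 \<in> Kset a" "gnull ((E - E0) \<union> (E0 - E))"
    unfolding approxK_def by blast
  have "\<forall>n. \<exists>H. H \<in> BF (sn a n) \<and> E0 = {\<omega>\<in>space M. (min (\<tau> \<omega>) (ereal (sn a n)), \<omega>) \<in> H}"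
  proof
    fix n
    have "E0 \<in> sjoin M (F (sn a n)) (sigma_rv M (\<lambda>\<omega>. min (\<tau> \<omega>) (ereal (sn a n))))"
      using E0(1) sn_gt[of a n] unfolding Kset_def by blast
    from DD[OF sn_ge0[OF a] this] show "\<exists>H. H \<in> BF (sn a n) \<and> E0 = {\<omega>\<in>space M. (min (\<tau> \<omega>) (ereal (sn a n)), \<omega>) \<in> H}"
      by blast
  qed
  then obtain H where "\<forall>n. H n \<in> BF (sn a n) \<and> E0 = {\<omega>\<in>space M. (min (\<tau> \<omega>) (ereal (sn a n)), \<omega>) \<in> H n}"
    using choice[of "\<lambda>n H. H \<in> BF (sn a n) \<and> E0 = {\<omega>\<in>space M. (min (\<tau> \<omega>) (ereal (sn a n)), \<omega>) \<in> H}"]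
    by blast
  then show ?thesis using that E0(2) by blast
qed

definition "liminfS (S :: nat \<Rightarrow> 'a set) = (\<Union>m. \<Inter>n. S (n + m))"

lemma liminfS_F: "0 \<le> a \<Longrightarrow> (\<And>n. S n \<in> F (sn a n)) \<Longrightarrow> liminfS S \<in> F a"
  unfolding liminfS_def sn_def by (rule liminf_F)

lemma liminfS_ev: "\<forall>n\<ge>m. (x \<in> S n \<longleftrightarrow> P) \<Longrightarrow> (x \<in> liminfS S \<longleftrightarrow> P)"
  unfolding liminfS_def
proof
  assume h: "\<forall>n\<ge>m. (x \<in> S n \<longleftrightarrow> P)" "x \<in> (\<Union>m. \<Inter>n. S (n + m))"
  then obtain m' where "\<forall>n. x \<in> S (n + m')" by auto
  then have "x \<in> S (m + m')" by blast
  then show P using h(1) by auto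
next
  assume h: "\<forall>n\<ge>m. (x \<in> S n \<longleftrightarrow> P)" P
  then have "\<forall>n. x \<in> S (n + m)" by auto
  then show "x \<in> (\<Union>m. \<Inter>n. S (n + m))" by blast
qed

lemma jeulin_pos:
  assumes a: "0 \<le> a" and H: "\<And>n. H n \<in> BF (sn a n)"
    and E0: "\<And>n. E0 = {\<omega>\<in>space M. (min (\<tau> \<omega>) (ereal (sn a n)), \<omega>) \<in> H n}"
  defines "E' \<equiv> liminfS (\<lambda>n. {\<omega>\<in>space M. (ereal (sn a n), \<omega>) \<in> H n})"
  shows "E' \<in> F a" and "\<And>\<omega>. \<omega> \<in> space M \<Longrightarrow> ereal a < \<tau> \<omega> \<Longrightarrow> (\<omega> \<in> E0 \<longleftrightarrow> \<omega> \<in> E')"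
proof -
  show "E' \<in> F a" unfolding E'_def
    by (rule liminfS_F[OF a]) (rule section_BF[OF sn_ge0[OF a] H])
next
  fix \<omega> assume \<omega>: "\<omega> \<in> space M" "ereal a < \<tau> \<omega>"
  from sn_eventually[OF \<omega>(2)] obtain m where m: "\<forall>n\<ge>m. ereal (sn a n) \<le> \<tau> \<omega>" by blast
  have "\<forall>n\<ge>m. (\<omega> \<in> {\<omega>\<in>space M. (ereal (sn a n), \<omega>) \<in> H n} \<longleftrightarrow> \<omega> \<in> E0)"
  proof (intro allI impI)
    fix n assume "m \<le> n"
    then have "ereal (sn a n) \<le> \<tau> \<omega>" using m by blast
    then have "min (\<tau> \<omega>) (ereal (sn a n)) = ereal (sn a n)" by (rule min_absorb2)
    then show "(\<omega> \<in> {\<omega>\<in>space M. (ereal (sn a n), \<omega>) \<in> H n} \<longleftrightarrow> \<omega> \<in> E0)"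
      using E0[of n] \<omega>(1) by auto
  qed
  from liminfS_ev[OF this] show "\<omega> \<in> E0 \<longleftrightarrow> \<omega> \<in> E'" unfolding E'_def by simp
qed

lemma jeulin_neg:
  assumes E0: "\<And>n. E0 = {\<omega>\<in>space M. (min (\<tau> \<omega>) (ereal (sn a n)), \<omega>) \<in> H n}"
    and "\<omega> \<in> space M" "\<tau> \<omega> \<le> ereal a"
  shows "\<omega> \<in> E0 \<longleftrightarrow> (\<tau> \<omega>, \<omega>) \<in> H n"
proof -
  have "\<tau> \<omega> \<le> ereal (sn a n)" using assms(3) sn_gt[of a n] by (meson ereal_less_eq(3) less_imp_le order_trans)
  then have "min (\<tau> \<omega>) (ereal (sn a n)) = \<tau> \<omega>" by (rule min_absorb1)
  then show ?thesis using E0[of n] assms(2) by auto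
qed

end

context setting begin

abbreviation "D \<equiv> proc_dom M"
abbreviation "OS \<equiv> optional_sigma M F"
abbreviation "BOS \<equiv> borel_opt_sigma M F"

lemma FUn: "0 \<le> t \<Longrightarrow> A \<in> F t \<Longrightarrow> B \<in> F t \<Longrightarrow> A \<union> B \<in> F t"
proof - assume "0 \<le> t" "A \<in> F t" "B \<in> F t" then interpret sigma_algebra "space M" "F t" by (simp add: Fsa)
  show ?thesis using \<open>A \<in> F t\<close> \<open>B \<in> F t\<close> by auto qed

definition "rect J G = {p\<in>proc_dom M. fst p \<in> J \<and> snd p \<in> G}"

lemma OS_sa: "sigma_algebra D OS"
  unfolding optional_sigma_def proc_sigma_def by (rule sigma_algebra_sigma_sets) auto

lemma BOS_sa: "sigma_algebra ({0..} \<times> D) BOS"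
proof -
  interpret O: sigma_algebra D OS by (rule OS_sa)
  show ?thesis unfolding borel_opt_sigma_def
    by (rule sigma_algebra_sigma_sets) (use O.sets_into_space in auto)
qed

lemma step_right:
  fixes c d t :: real and f :: "real \<Rightarrow> real" defines "f \<equiv> \<lambda>y. if c \<le> y \<and> y < d then 1 else 0"
  shows "eventually (\<lambda>y. f y = f t) (at_right t)"
  unfolding eventually_at_right_field
proof (cases "c \<le> t \<and> t < d")
  case True then show "\<exists>b>t. \<forall>y>t. y < b \<longrightarrow> f y = f t"
    by (intro exI[of _ d]) (auto simp: f_def)
next
  case False
  show "\<exists>b>t. \<forall>y>t. y < b \<longrightarrow> f y = f t"
  proof (cases "t < c")
    case True then show ?thesis by (intro exI[of _ c]) (auto simp: f_def)
  next
    case False2: False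
    then show ?thesis using False by (intro exI[of _ "t+1"]) (auto simp: f_def)
  qed
qed

lemma step_left:
  fixes c d t :: real and f :: "real \<Rightarrow> real" defines "f \<equiv> \<lambda>y. if c \<le> y \<and> y < d then 1 else 0"
  shows "\<exists>l. eventually (\<lambda>y. f y = l) (at_left t)"
proof (cases "t \<le> c")
  case True
  have "eventually (\<lambda>y. f y = 0) (at_left t)" unfolding eventually_at_left_field
    using True by (intro exI[of _ "t - 1"]) (auto simp: f_def)
  then show ?thesis by blast
next
  case False
  show ?thesis
  proof (cases "t \<le> d")
    case True
    have "eventually (\<lambda>y. f y = 1) (at_left t)" unfolding eventually_at_left_field
      using True False by (intro exI[of _ c]) (auto simp: f_def)
    then show ?thesis by blast
  next
    case False2: False
    have "eventually (\<lambda>y. f y = 0) (at_left t)" unfolding eventually_at_left_field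
      using False2 by (intro exI[of _ d]) (auto simp: f_def)
    then show ?thesis by blast
  qed
qed

lemma ind_set: "G \<subseteq> space M \<Longrightarrow> {\<omega>\<in>space M. (if \<omega> \<in> G then 1 else 0::real) \<in> B} =
   (if 1 \<in> B then G else {}) \<union> (if 0 \<in> B then space M - G else {})"
  by auto

lemma rect_ico_OS:
  assumes c: "0 \<le> c" and G: "G \<in> F c"
  shows "rect {c..<d} G \<in> OS"
proof -
  define X where "X = (\<lambda>t \<omega>. if c \<le> t \<and> t < d \<and> \<omega> \<in> G then 1 else (0::real))"
  have Gsp: "G \<subseteq> space M" using Fpow[OF c] G by auto
  have ad: "adapted M F X" unfolding adapted_def
  proof (intro allI impI ballI)
    fix t :: real and B assume t: "0 \<le> t" and B: "B \<in> sets (borel :: real measure)"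
    show "{\<omega>\<in>space M. X t \<omega> \<in> B} \<in> F t"
    proof (cases "c \<le> t \<and> t < d")
      case True
      then have GF: "G \<in> F t" using Fmono[OF c, of t] G by auto
      have "{\<omega>\<in>space M. X t \<omega> \<in> B} = (if 1 \<in> B then G else {}) \<union> (if 0 \<in> B then space M - G else {})"
        unfolding X_def using True Gsp by auto
      then show ?thesis using GF Fcompl[OF t GF] Fempty[OF t]
        FUn[OF t] by (auto split: if_splits)
    next
      case False
      have "{\<omega>\<in>space M. X t \<omega> \<in> B} = (if 0 \<in> B then space M else {})"
        unfolding X_def using False by auto
      then show ?thesis using Fsp[OF t] Fempty[OF t] by auto
    qed
  qed
  have cd: "cadlag_paths M X" unfolding cadlag_paths_def
  proof (intro ballI allI impI conjI)
    fix \<omega> t assume "\<omega> \<in> space M" "0 \<le> (t::real)"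
    show "continuous (at_right t) (\<lambda>s. X s \<omega>)"
    proof (cases "\<omega> \<in> G")
      case True
      then have e: "(\<lambda>s. X s \<omega>) = (\<lambda>y. if c \<le> y \<and> y < d then 1 else 0)" unfolding X_def by auto
      show ?thesis unfolding e continuous_within
        by (rule tendsto_eventually) (rule step_right)
    next
      case False
      then have e: "(\<lambda>s. X s \<omega>) = (\<lambda>y. 0)" unfolding X_def by auto
      show ?thesis unfolding e by simp
    qed
  next
    fix \<omega> t assume "\<omega> \<in> space M" "0 \<le> (t::real)" "0 < t"
    show "\<exists>l. ((\<lambda>s. X s \<omega>) \<longlongrightarrow> l) (at_left t)"
    proof (cases "\<omega> \<in> G")
      case True
      then have e: "(\<lambda>s. X s \<omega>) = (\<lambda>y. if c \<le> y \<and> y < d then 1 else 0)" unfolding X_def by auto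
      obtain l where "eventually (\<lambda>y. (if c \<le> y \<and> y < d then 1 else 0::real) = l) (at_left t)"
        using step_left by blast
      then show ?thesis unfolding e by (intro exI[of _ l]) (rule tendsto_eventually)
    next
      case False
      then have e: "(\<lambda>s. X s \<omega>) = (\<lambda>y. 0)" unfolding X_def by auto
      show ?thesis unfolding e by auto
    qed
  qed
  have "{p\<in>proc_dom M. X (fst p) (snd p) \<in> {1}} \<in> OS"
    unfolding optional_sigma_def proc_sigma_def
    apply (rule sigma_sets.Basic)
    apply (rule CollectI)
    apply (rule exI[of _ X])
    apply (rule exI[of _ "{1::real}"])
    using ad cd by simp
  moreover have "{p\<in>proc_dom M. X (fst p) (snd p) \<in> {1}} = rect {c..<d} G"
    unfolding rect_def X_def by auto
  ultimately show ?thesis by simp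
qed

lemma rect_oc_OS:
  assumes c: "0 \<le> c" and G: "G \<in> F c"
  shows "rect {c<..d} G \<in> OS"
proof -
  interpret O: sigma_algebra D OS by (rule OS_sa)
  have "rect {c + 1 / Suc m..<d + 1 / Suc n} G \<in> OS" for m n
  proof -
    have c': "0 \<le> c + 1 / Suc m" using c by simp
    have "G \<in> F (c + 1 / Suc m)" using Fmono[OF c, of "c + 1 / Suc m"] G by auto
    then show ?thesis by (rule rect_ico_OS[OF c'])
  qed
  then have "(\<Union>m. \<Inter>n. rect {c + 1 / Suc m..<d + 1 / Suc n} G) \<in> OS"
    by (intro O.countable_nat_UN O.countable_INT) auto
  moreover have "(\<Union>m. \<Inter>n. rect {c + 1 / Suc m..<d + 1 / Suc n} G) = rect {c<..d} G"
  proof (rule set_eqI)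
    fix p :: "real \<times> 'a"
    obtain t \<omega> where p: "p = (t, \<omega>)" by fastforce
    have "(\<exists>m. \<forall>n. c + 1 / Suc m \<le> t \<and> t < d + 1 / Suc n) \<longleftrightarrow> c < t \<and> t \<le> d"
    proof
      assume "\<exists>m. \<forall>n. c + 1 / Suc m \<le> t \<and> t < d + 1 / Suc n"
      then obtain m where m: "\<forall>n. c + 1 / Suc m \<le> t \<and> t < d + 1 / Suc n" by blast
      have "0 < 1 / real (Suc m)" by simp
      then have "c < t" using m by (meson less_add_same_cancel1 less_le_trans)
      moreover have "t \<le> d"
      proof (rule ccontr)
        assume "\<not> t \<le> d"
        then have "0 < t - d" by simp
        from reals_Archimedean[OF this] obtain n where "inverse (real (Suc n)) < t - d" by blast
        moreover have "t < d + 1 / Suc n" using m by blast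
        ultimately show False by (simp add: inverse_eq_divide)
      qed
      ultimately show "c < t \<and> t \<le> d" by blast
    next
      assume h: "c < t \<and> t \<le> d"
      then have "0 < t - c" by simp
      from reals_Archimedean[OF this] obtain m where "inverse (real (Suc m)) < t - c" by blast
      then have c1: "c + 1 / Suc m \<le> t" by (simp add: inverse_eq_divide)
      have "t < d + 1 / Suc n" for n
      proof -
        have "0 < 1 / real (Suc n)" by simp
        then show ?thesis using h by linarith
      qed
      then have "\<forall>n. c + 1 / Suc m \<le> t \<and> t < d + 1 / Suc n" using c1 by blast
      then show "\<exists>m. \<forall>n. c + 1 / Suc m \<le> t \<and> t < d + 1 / Suc n" by blast
    qed
    then show "p \<in> (\<Union>m. \<Inter>n. rect {c + 1 / Suc m..<d + 1 / Suc n} G) \<longleftrightarrow> p \<in> rect {c<..d} G"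
      unfolding rect_def p by auto
  qed
  ultimately show ?thesis by simp
qed

lemma rect_0_OS:
  assumes G: "G \<in> F 0"
  shows "rect {0} G \<in> OS"
proof -
  interpret O: sigma_algebra D OS by (rule OS_sa)
  have "rect {0..<1 / Suc n} G \<in> OS" for n by (rule rect_ico_OS[OF _ G]) simp
  then have "(\<Inter>n. rect {0..<1 / Suc n} G) \<in> OS" by (intro O.countable_INT) auto
  moreover have "(\<Inter>n. rect {0..<1 / Suc n} G) = rect {0} G"
  proof (rule set_eqI)
    fix p :: "real \<times> 'a"
    obtain t \<omega> where p: "p = (t, \<omega>)" by fastforce
    have "(\<forall>n. 0 \<le> t \<and> t < 1 / Suc n) \<longleftrightarrow> t = 0"
    proof
      assume m: "\<forall>n. 0 \<le> t \<and> t < 1 / Suc n"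
      show "t = 0"
      proof (rule ccontr)
        assume "t \<noteq> 0" then have "0 < t" using m by force
        from reals_Archimedean[OF this] obtain n where "inverse (real (Suc n)) < t" by blast
        moreover have "t < 1 / Suc n" using m by blast
        ultimately show False by (simp add: inverse_eq_divide)
      qed
    qed simp
    then show "p \<in> (\<Inter>n. rect {0..<1 / Suc n} G) \<longleftrightarrow> p \<in> rect {0} G"
      unfolding rect_def p by auto
  qed
  ultimately show ?thesis by simp
qed

end

context setting begin

lemma D_iff: "(t, \<omega>) \<in> D \<longleftrightarrow> 0 \<le> t \<and> \<omega> \<in> space M"
  unfolding proc_dom_def by auto

lemma OS_D: "D \<in> OS"
proof - interpret O: sigma_algebra D OS by (rule OS_sa) show ?thesis by simp qed

lemma BOS_gen: "A \<in> sets (borel :: ereal measure) \<Longrightarrow> C \<in> OS \<Longrightarrow> (A \<inter> {0..}) \<times> C \<in> BOS"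
  unfolding borel_opt_sigma_def by (rule sigma_sets.Basic) blast

lemma BF_BOS:
  assumes s: "0 \<le> s" and J: "\<forall>G\<in>F s. rect J G \<in> OS" and H: "H \<in> BF s"
  shows "{q\<in>{0..} \<times> D. fst (snd q) \<in> J \<and> (fst q, snd (snd q)) \<in> H} \<in> BOS"
  using H unfolding BF_def
proof induction
  case (Basic H)
  then obtain U G where UG: "H = U \<times> G" "U \<in> sets borel" "G \<in> F s" by blast
  have "{q\<in>{0..} \<times> D. fst (snd q) \<in> J \<and> (fst q, snd (snd q)) \<in> H} = (U \<inter> {0..}) \<times> rect J G"
    unfolding UG(1) rect_def by auto
  then show ?case using BOS_gen[OF UG(2)] J UG(3) by simp
next
  case Empty
  interpret B: sigma_algebra "{0..} \<times> D" BOS by (rule BOS_sa)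
  show ?case by simp
next
  case (Compl H)
  interpret B: sigma_algebra "{0..} \<times> D" BOS by (rule BOS_sa)
  have "{q\<in>{0..} \<times> D. fst (snd q) \<in> J \<and> (fst q, snd (snd q)) \<in> UNIV \<times> space M - H} =
     (UNIV \<inter> {0..}) \<times> rect J (space M) - {q\<in>{0..} \<times> D. fst (snd q) \<in> J \<and> (fst q, snd (snd q)) \<in> H}"
    unfolding rect_def proc_dom_def by auto
  moreover have "(UNIV \<inter> {0..}) \<times> rect J (space M) \<in> BOS"
    using BOS_gen[OF UNIV_borel] J Fsp[OF s] by blast
  ultimately show ?case using Compl.IH by (simp add: B.Diff)
next
  case (Union H)
  interpret B: sigma_algebra "{0..} \<times> D" BOS by (rule BOS_sa)
  have "{q\<in>{0..} \<times> D. fst (snd q) \<in> J \<and> (fst q, snd (snd q)) \<in> (\<Union>i. H i)} =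
    (\<Union>i. {q\<in>{0..} \<times> D. fst (snd q) \<in> J \<and> (fst q, snd (snd q)) \<in> H i})" by blast
  moreover have "(\<Union>i. {q\<in>{0..} \<times> D. fst (snd q) \<in> J \<and> (fst q, snd (snd q)) \<in> H i}) \<in> BOS"
    using Union.IH by (intro B.countable_nat_UN) auto
  ultimately show ?case by simp
qed

definition "dec A \<longleftrightarrow> (\<exists>A'\<in>OS. \<exists>A''\<in>BOS. \<exists>Z. gnull Z \<and>
   (\<forall>\<omega>\<in>space M - Z. \<forall>t\<ge>0. ((t,\<omega>)\<in>A \<longleftrightarrow> (if ereal t < \<tau> \<omega> then (t,\<omega>)\<in>A' else (\<tau> \<omega>,(t,\<omega>))\<in>A''))))"

lemma decI:
  assumes "A' \<in> OS" "A'' \<in> BOS" "gnull Z"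
    "\<forall>\<omega>\<in>space M - Z. \<forall>t\<ge>0. ((t,\<omega>)\<in>A \<longleftrightarrow> (if ereal t < \<tau> \<omega> then (t,\<omega>)\<in>A' else (\<tau> \<omega>,(t,\<omega>))\<in>A''))"
  shows "dec A"
  unfolding dec_def
  apply (rule bexI[where x=A'])
   apply (rule bexI[where x=A''])
    apply (rule exI[where x=Z])
    apply (rule conjI)
     apply (rule assms(3))
    apply (rule assms(4))
   apply (rule assms(2))
  apply (rule assms(1))
  done

definition "dcond A A' A'' Z \<longleftrightarrow> (\<forall>\<omega>\<in>space M - Z. \<forall>t\<ge>0. ((t,\<omega>)\<in>A \<longleftrightarrow> (if ereal t < \<tau> \<omega> then (t,\<omega>)\<in>A' else (\<tau> \<omega>,(t,\<omega>))\<in>A'')))"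

lemma dec_iff: "dec A \<longleftrightarrow> (\<exists>A' A'' Z. A' \<in> OS \<and> A'' \<in> BOS \<and> gnull Z \<and> dcond A A' A'' Z)"
  unfolding dec_def dcond_def Bex_def by (rule iffI; elim exE conjE; intro exI conjI; assumption)

definition "Dec = {A. A \<subseteq> D \<and> dec A}"

lemma Dec_sa: "sigma_algebra D Dec"
  unfolding sigma_algebra_iff2
proof (intro conjI allI impI ballI)
  interpret O: sigma_algebra D OS by (rule OS_sa)
  interpret B: sigma_algebra "{0..} \<times> D" BOS by (rule BOS_sa)
  show "Dec \<subseteq> Pow D" unfolding Dec_def by auto
  show "{} \<in> Dec" unfolding Dec_def dec_def
    by (auto intro!: bexI[of _ "{}"] exI[of _ "{}"] gnull_empty)
next
  interpret O: sigma_algebra D OS by (rule OS_sa)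
  interpret B: sigma_algebra "{0..} \<times> D" BOS by (rule BOS_sa)
  fix A assume "A \<in> Dec"
  then obtain A' A'' Z where A: "A \<subseteq> D" "A' \<in> OS" "A'' \<in> BOS" "gnull Z"
    "\<forall>\<omega>\<in>space M - Z. \<forall>t\<ge>0. ((t,\<omega>)\<in>A \<longleftrightarrow> (if ereal t < \<tau> \<omega> then (t,\<omega>)\<in>A' else (\<tau> \<omega>,(t,\<omega>))\<in>A''))"
    unfolding Dec_def dec_def by blast
  have "\<forall>\<omega>\<in>space M - Z. \<forall>t\<ge>0. ((t,\<omega>)\<in>D - A \<longleftrightarrow> (if ereal t < \<tau> \<omega> then (t,\<omega>)\<in>D - A' else (\<tau> \<omega>,(t,\<omega>))\<in>{0..} \<times> D - A''))"
  proof (intro ballI allI impI)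
    fix \<omega> t assume \<omega>: "\<omega> \<in> space M - Z" and t: "0 \<le> (t::real)"
    have "0 \<le> \<tau> \<omega>" using taupos \<omega> by auto
    then show "((t,\<omega>)\<in>D - A \<longleftrightarrow> (if ereal t < \<tau> \<omega> then (t,\<omega>)\<in>D - A' else (\<tau> \<omega>,(t,\<omega>))\<in>{0..} \<times> D - A''))"
      using A(5) \<omega> t by (auto simp: D_iff)
  qed
  note main = this
  have o: "D - A' \<in> OS" using A(2) by auto
  have b: "{0..} \<times> D - A'' \<in> BOS" using A(3) by auto
  have "dec (D - A)" by (rule decI[OF o b A(4) main])
  then show "D - A \<in> Dec" unfolding Dec_def by (intro CollectI conjI Diff_subset)
next
  interpret O: sigma_algebra D OS by (rule OS_sa)
  interpret B: sigma_algebra "{0..} \<times> D" BOS by (rule BOS_sa)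
  fix A :: "nat \<Rightarrow> (real \<times> 'a) set" assume RA: "range A \<subseteq> Dec"
  have "\<forall>i. \<exists>A' A'' Z. A' \<in> OS \<and> A'' \<in> BOS \<and> gnull Z \<and> dcond (A i) A' A'' Z"
  proof
    fix i have "dec (A i)" using RA unfolding Dec_def by blast
    then show "\<exists>A' A'' Z. A' \<in> OS \<and> A'' \<in> BOS \<and> gnull Z \<and> dcond (A i) A' A'' Z"
      unfolding dec_iff .
  qed
  then obtain A' A'' Z where AA: "\<forall>i. A' i \<in> OS \<and> A'' i \<in> BOS \<and> gnull (Z i) \<and> dcond (A i) (A' i) (A'' i) (Z i)"
    by metis
  have AD: "\<forall>i. A i \<subseteq> D" using RA unfolding Dec_def by blast
  have "\<forall>\<omega>\<in>space M - (\<Union>i. Z i). \<forall>t\<ge>0. ((t,\<omega>)\<in>(\<Union>i. A i) \<longleftrightarrow> (if ereal t < \<tau> \<omega> then (t,\<omega>)\<in>(\<Union>i. A' i) else (\<tau> \<omega>,(t,\<omega>))\<in>(\<Union>i. A'' i)))"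
  proof (intro ballI allI impI)
    fix \<omega> t assume \<omega>: "\<omega> \<in> space M - (\<Union>i. Z i)" and t: "0 \<le> (t::real)"
    have "\<forall>i. ((t,\<omega>)\<in>A i \<longleftrightarrow> (if ereal t < \<tau> \<omega> then (t,\<omega>)\<in>A' i else (\<tau> \<omega>,(t,\<omega>))\<in>A'' i))"
    proof
      fix i have "dcond (A i) (A' i) (A'' i) (Z i)" using AA by blast
      moreover have "\<omega> \<in> space M - Z i" using \<omega> by blast
      ultimately show "((t,\<omega>)\<in>A i \<longleftrightarrow> (if ereal t < \<tau> \<omega> then (t,\<omega>)\<in>A' i else (\<tau> \<omega>,(t,\<omega>))\<in>A'' i))"
        unfolding dcond_def using t by blast
    qed
    then show "((t,\<omega>)\<in>(\<Union>i. A i) \<longleftrightarrow> (if ereal t < \<tau> \<omega> then (t,\<omega>)\<in>(\<Union>i. A' i) else (\<tau> \<omega>,(t,\<omega>))\<in>(\<Union>i. A'' i)))"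
      by (cases "ereal t < \<tau> \<omega>") auto
  qed
  note main = this
  have o: "(\<Union>i. A' i) \<in> OS" using AA by (intro O.countable_nat_UN) auto
  have b: "(\<Union>i. A'' i) \<in> BOS" using AA by (intro B.countable_nat_UN) auto
  have z: "gnull (\<Union>i. Z i)" using AA by (intro gnull_UN) auto
  have "dec (\<Union>i. A i)" by (rule decI[OF o b z main])
  moreover have "(\<Union>i. A i) \<subseteq> D" using AD by auto
  ultimately show "\<Union>(range A) \<in> Dec" unfolding Dec_def by (intro CollectI conjI)
qed

end

context setting begin

lemma dec_interval:
  assumes a: "0 \<le> a" and E: "E \<in> G_filt M F \<tau> a"
  shows "rect {a<..b} E \<in> Dec"
proof -
  interpret O: sigma_algebra D OS by (rule OS_sa)
  interpret B: sigma_algebra "{0..} \<times> D" BOS by (rule BOS_sa)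
  obtain E0 H where Z0: "gnull ((E - E0) \<union> (E0 - E))" and H: "\<And>n. H n \<in> BF (sn a n)"
    and E0: "\<And>n. E0 = {\<omega>\<in>space M. (min (\<tau> \<omega>) (ereal (sn a n)), \<omega>) \<in> H n}"
    using jeulin[OF a E] by blast
  define E' where "E' = liminfS (\<lambda>n. {\<omega>\<in>space M. (ereal (sn a n), \<omega>) \<in> H n})"
  have E'F: "E' \<in> F a" unfolding E'_def by (rule jeulin_pos(1)[OF a H E0])
  have E'eq: "\<And>\<omega>. \<omega>\<in>space M \<Longrightarrow> ereal a < \<tau> \<omega> \<Longrightarrow> (\<omega>\<in>E0 \<longleftrightarrow> \<omega>\<in>E')"
    unfolding E'_def by (rule jeulin_pos(2)[OF a H E0])
  define A' where "A' = rect {a<..b} E'"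
  define A1 where "A1 = ({ereal a<..} \<inter> {0..}) \<times> rect {a<..b} E'"
  define A2 where "A2 = (\<Union>n. {q\<in>{0..}\<times>D. fst (snd q) \<in> {sn a n<..b} \<and> (fst q, snd (snd q)) \<in> H n})
     \<inter> (({..ereal a} \<inter> {0..}) \<times> D)"
  have A'O: "A' \<in> OS" unfolding A'_def by (rule rect_oc_OS[OF a E'F])
  have A1B: "A1 \<in> BOS" unfolding A1_def by (rule BOS_gen) (auto intro: rect_oc_OS[OF a E'F])
  have "{q\<in>{0..}\<times>D. fst (snd q) \<in> {sn a n<..b} \<and> (fst q, snd (snd q)) \<in> H n} \<in> BOS" for n
    by (rule BF_BOS[OF sn_ge0[OF a] _ H]) (auto intro: rect_oc_OS[OF sn_ge0[OF a]])
  then have "(\<Union>n. {q\<in>{0..}\<times>D. fst (snd q) \<in> {sn a n<..b} \<and> (fst q, snd (snd q)) \<in> H n}) \<in> BOS"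
    by (intro B.countable_nat_UN) auto
  moreover have "({..ereal a} \<inter> {0..}) \<times> D \<in> BOS" by (rule BOS_gen) (auto intro: OS_D)
  ultimately have A2B: "A2 \<in> BOS" unfolding A2_def by (rule B.Int)
  have A12B: "A1 \<union> A2 \<in> BOS" using A1B A2B by (rule B.Un)
  have cond: "\<forall>\<omega>\<in>space M - ((E - E0) \<union> (E0 - E)). \<forall>t\<ge>0. ((t,\<omega>)\<in>rect {a<..b} E \<longleftrightarrow>
     (if ereal t < \<tau> \<omega> then (t,\<omega>)\<in>A' else (\<tau> \<omega>,(t,\<omega>))\<in>A1 \<union> A2))"
  proof (intro ballI allI impI)
    fix \<omega> and t :: real assume \<omega>: "\<omega> \<in> space M - ((E - E0) \<union> (E0 - E))" and t: "0 \<le> t"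
    have \<omega>M: "\<omega> \<in> space M" and EE0: "\<omega> \<in> E \<longleftrightarrow> \<omega> \<in> E0" using \<omega> by auto
    have tau0: "0 \<le> \<tau> \<omega>" using taupos \<omega>M by auto
    have L: "(t,\<omega>)\<in>rect {a<..b} E \<longleftrightarrow> a < t \<and> t \<le> b \<and> \<omega> \<in> E0"
      unfolding rect_def using t \<omega>M EE0 by (auto simp: D_iff)
    show "((t,\<omega>)\<in>rect {a<..b} E \<longleftrightarrow>
     (if ereal t < \<tau> \<omega> then (t,\<omega>)\<in>A' else (\<tau> \<omega>,(t,\<omega>))\<in>A1 \<union> A2))"
    proof (cases "ereal t < \<tau> \<omega>")
      case True
      have "(t,\<omega>)\<in>A' \<longleftrightarrow> a < t \<and> t \<le> b \<and> \<omega> \<in> E'"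
        unfolding A'_def rect_def using t \<omega>M by (auto simp: D_iff)
      moreover have "a < t \<Longrightarrow> (\<omega> \<in> E0 \<longleftrightarrow> \<omega> \<in> E')"
      proof -
        assume "a < t"
        then have "ereal a < ereal t" by simp
        then have "ereal a < \<tau> \<omega>" using True by (rule less_trans)
        then show ?thesis by (rule E'eq[OF \<omega>M])
      qed
      ultimately show ?thesis using True L by auto
    next
      case False
      show ?thesis
      proof (cases "ereal a < \<tau> \<omega>")
        case True
        have "(\<tau> \<omega>,(t,\<omega>)) \<in> A1 \<longleftrightarrow> a < t \<and> t \<le> b \<and> \<omega> \<in> E'"
          unfolding A1_def rect_def using t \<omega>M True tau0 by (auto simp: D_iff)
        moreover have "(\<tau> \<omega>,(t,\<omega>)) \<notin> A2" unfolding A2_def using True by auto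
        ultimately show ?thesis using False L E'eq[OF \<omega>M True] by auto
      next
        case True2: False
        then have le: "\<tau> \<omega> \<le> ereal a" by simp
        have "(\<tau> \<omega>,(t,\<omega>)) \<notin> A1" unfolding A1_def using True2 by auto
        moreover have "(\<tau> \<omega>,(t,\<omega>)) \<in> A2 \<longleftrightarrow> (\<exists>n. sn a n < t \<and> t \<le> b \<and> (\<tau> \<omega>, \<omega>) \<in> H n)"
          unfolding A2_def using le tau0 t \<omega>M by (auto simp: D_iff)
        moreover have "(\<exists>n. sn a n < t \<and> t \<le> b \<and> (\<tau> \<omega>, \<omega>) \<in> H n) \<longleftrightarrow> a < t \<and> t \<le> b \<and> \<omega> \<in> E0"
        proof
          assume "\<exists>n. sn a n < t \<and> t \<le> b \<and> (\<tau> \<omega>, \<omega>) \<in> H n"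
          then obtain n where n: "sn a n < t" "t \<le> b" "(\<tau> \<omega>, \<omega>) \<in> H n" by blast
          have "a < t" using n(1) sn_gt[of a n] by linarith
          moreover have "\<omega> \<in> E0" using jeulin_neg[OF E0 \<omega>M le] n(3) by blast
          ultimately show "a < t \<and> t \<le> b \<and> \<omega> \<in> E0" using n(2) by blast
        next
          assume h: "a < t \<and> t \<le> b \<and> \<omega> \<in> E0"
          then obtain n where n: "sn a n < t" using sn_below by blast
          have "(\<tau> \<omega>, \<omega>) \<in> H n" using jeulin_neg[OF E0 \<omega>M le] h by blast
          then show "\<exists>n. sn a n < t \<and> t \<le> b \<and> (\<tau> \<omega>, \<omega>) \<in> H n" using n h by blast
        qed
        ultimately show ?thesis using False L by auto
      qed
    qed
  qed
  have "dec (rect {a<..b} E)" by (rule decI[OF A'O A12B Z0 cond])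
  moreover have "rect {a<..b} E \<subseteq> D" unfolding rect_def by auto
  ultimately show ?thesis unfolding Dec_def by (intro CollectI conjI)
qed

lemma dec_zero:
  assumes E: "E \<in> G_filt M F \<tau> 0"
  shows "rect {0} E \<in> Dec"
proof -
  interpret O: sigma_algebra D OS by (rule OS_sa)
  interpret B: sigma_algebra "{0..} \<times> D" BOS by (rule BOS_sa)
  have a: "0 \<le> (0::real)" by simp
  obtain E0 H where Z0: "gnull ((E - E0) \<union> (E0 - E))" and H: "\<And>n. H n \<in> BF (sn 0 n)"
    and E0: "\<And>n. E0 = {\<omega>\<in>space M. (min (\<tau> \<omega>) (ereal (sn 0 n)), \<omega>) \<in> H n}"
    using jeulin[OF a E] by blast
  define E' where "E' = liminfS (\<lambda>n. {\<omega>\<in>space M. (ereal (sn 0 n), \<omega>) \<in> H n})"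
  have E'F: "E' \<in> F 0" unfolding E'_def by (rule jeulin_pos(1)[OF a H E0])
  have E'eq: "\<And>\<omega>. \<omega>\<in>space M \<Longrightarrow> ereal 0 < \<tau> \<omega> \<Longrightarrow> (\<omega>\<in>E0 \<longleftrightarrow> \<omega>\<in>E')"
    unfolding E'_def by (rule jeulin_pos(2)[OF a H E0])
  define E'' where "E'' = liminfS (\<lambda>n. {\<omega>\<in>space M. (0, \<omega>) \<in> H n})"
  have E''F: "E'' \<in> F 0" unfolding E''_def
    by (rule liminfS_F[OF a]) (rule section_BF[OF sn_ge0[OF a] H])
  have E''eq: "\<omega> \<in> E0 \<longleftrightarrow> \<omega> \<in> E''" if \<omega>M: "\<omega> \<in> space M" and z: "\<tau> \<omega> = 0" for \<omega>
  proof -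
    have le: "\<tau> \<omega> \<le> ereal 0" using z by simp
    have "\<forall>n\<ge>0. (\<omega> \<in> {\<omega>\<in>space M. (0, \<omega>) \<in> H n} \<longleftrightarrow> \<omega> \<in> E0)"
      using jeulin_neg[OF E0 \<omega>M le] z \<omega>M by auto
    from liminfS_ev[OF this] show ?thesis unfolding E''_def by simp
  qed
  define A' where "A' = rect {0} E'"
  define A'' where "A'' = ((UNIV::ereal set) \<inter> {0..}) \<times> rect {0} E''"
  have A'O: "A' \<in> OS" unfolding A'_def by (rule rect_0_OS[OF E'F])
  have A''B: "A'' \<in> BOS" unfolding A''_def by (rule BOS_gen[OF UNIV_borel rect_0_OS[OF E''F]])
  have cond: "\<forall>\<omega>\<in>space M - ((E - E0) \<union> (E0 - E)). \<forall>t\<ge>0. ((t,\<omega>)\<in>rect {0} E \<longleftrightarrow>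
     (if ereal t < \<tau> \<omega> then (t,\<omega>)\<in>A' else (\<tau> \<omega>,(t,\<omega>))\<in>A''))"
  proof (intro ballI allI impI)
    fix \<omega> and t :: real assume \<omega>: "\<omega> \<in> space M - ((E - E0) \<union> (E0 - E))" and t: "0 \<le> t"
    have \<omega>M: "\<omega> \<in> space M" and EE0: "\<omega> \<in> E \<longleftrightarrow> \<omega> \<in> E0" using \<omega> by auto
    have tau0: "0 \<le> \<tau> \<omega>" using taupos \<omega>M by auto
    have L: "(t,\<omega>)\<in>rect {0} E \<longleftrightarrow> t = 0 \<and> \<omega> \<in> E0"
      unfolding rect_def using t \<omega>M EE0 by (auto simp: D_iff)
    show "((t,\<omega>)\<in>rect {0} E \<longleftrightarrow>
     (if ereal t < \<tau> \<omega> then (t,\<omega>)\<in>A' else (\<tau> \<omega>,(t,\<omega>))\<in>A''))"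
    proof (cases "ereal t < \<tau> \<omega>")
      case True
      have "(t,\<omega>)\<in>A' \<longleftrightarrow> t = 0 \<and> \<omega> \<in> E'"
        unfolding A'_def rect_def using t \<omega>M by (auto simp: D_iff)
      moreover have "t = 0 \<Longrightarrow> (\<omega> \<in> E0 \<longleftrightarrow> \<omega> \<in> E')"
        using E'eq[OF \<omega>M] True by simp
      ultimately show ?thesis using True L by auto
    next
      case False
      have "(\<tau> \<omega>,(t,\<omega>)) \<in> A'' \<longleftrightarrow> t = 0 \<and> \<omega> \<in> E''"
        unfolding A''_def rect_def using t \<omega>M tau0 by (auto simp: D_iff)
      moreover have "t = 0 \<Longrightarrow> \<tau> \<omega> = 0"
      proof -
        assume "t = 0"
        then have "\<tau> \<omega> \<le> 0" using False by (simp add: zero_ereal_def not_less)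
        then show ?thesis using tau0 by (rule antisym)
      qed
      ultimately show ?thesis using False L E''eq[OF \<omega>M] by auto
    qed
  qed
  have "dec (rect {0} E)" by (rule decI[OF A'O A''B Z0 cond])
  moreover have "rect {0} E \<subseteq> D" unfolding rect_def by auto
  ultimately show ?thesis unfolding Dec_def by (intro CollectI conjI)
qed

end

context setting begin

definition "gn (n::nat) (t::real) = (if t \<le> 0 then 0 else real_of_int (\<lceil>t * 2^n\<rceil> - 1) / 2^n)"

lemma gn_interval:
  assumes t: "0 < t"
  shows "gn n t = real k / 2^n \<longleftrightarrow> real k / 2^n < t \<and> t \<le> (real k + 1) / 2^n"
proof -
  have p: "(0::real) < 2^n" by simp
  have "gn n t = real k / 2^n \<longleftrightarrow> real_of_int (\<lceil>t * 2^n\<rceil> - 1) = real k"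
    unfolding gn_def using t p by (auto simp: divide_cancel_right)
  also have "\<dots> \<longleftrightarrow> \<lceil>t * 2^n\<rceil> = int k + 1" by linarith
  also have "\<dots> \<longleftrightarrow> real k < t * 2^n \<and> t * 2^n \<le> real k + 1"
    unfolding ceiling_eq_iff by simp
  also have "\<dots> \<longleftrightarrow> real k / 2^n < t \<and> t \<le> (real k + 1) / 2^n"
    using p by (simp add: divide_less_eq le_divide_eq)
  finally show ?thesis .
qed

lemma gn_ex:
  assumes t: "0 < t" shows "\<exists>k::nat. gn n t = real k / 2^n"
proof -
  have "1 \<le> \<lceil>t * 2^n\<rceil>" using t by (simp add: one_le_ceiling)
  then have "real_of_int (\<lceil>t * 2^n\<rceil> - 1) = real (nat (\<lceil>t * 2^n\<rceil> - 1))" by simp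
  then show ?thesis unfolding gn_def using t by (intro exI[of _ "nat (\<lceil>t * 2^n\<rceil> - 1)"]) simp
qed

lemma gn_bounds:
  assumes t: "0 < t" shows "gn n t < t" "t - 1 / 2^n \<le> gn n t"
proof -
  obtain k where k: "gn n t = real k / 2^n" using gn_ex[OF t] by blast
  then have i: "real k / 2^n < t" "t \<le> (real k + 1) / 2^n" using gn_interval[OF t] by auto
  show "gn n t < t" using k i by simp
  have "(real k + 1) / 2^n = real k / 2^n + 1 / 2^n" by (simp add: add_divide_distrib)
  then show "t - 1 / 2^n \<le> gn n t" using k i by simp
qed

lemma gn_lim:
  assumes t: "0 < t" shows "filterlim (\<lambda>n. gn n t) (at_left t) sequentially"
proof (rule tendsto_imp_filterlim_at_left)
  show "\<forall>\<^sub>F n in sequentially. gn n t < t" using gn_bounds(1)[OF t] by simp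
  have z: "(\<lambda>n. t - 1 / 2^n) \<longlonglongrightarrow> t - 0"
    by (intro tendsto_intros) (simp add: LIMSEQ_inverse_realpow_zero[of 2, simplified inverse_eq_divide])
  show "(\<lambda>n. gn n t) \<longlonglongrightarrow> t"
    by (rule real_tendsto_sandwich[of "\<lambda>n. t - 1 / 2^n" _ _ "\<lambda>n. t"])
       (use z gn_bounds[OF t] in \<open>auto simp: less_imp_le\<close>)
qed

definition "DM = measure_of D Dec (\<lambda>_. 0)"

lemma sets_DM: "sets DM = Dec"
  unfolding DM_def by (rule sigma_algebra.sets_measure_of_eq[OF Dec_sa])
lemma space_DM: "space DM = D"
  unfolding DM_def by (rule space_measure_of_conv)

lemma lc_gen:
  assumes ad: "adapted M (G_filt M F \<tau>) X" and lc: "left_cont_paths M X"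
    and B: "B \<in> sets (borel :: real measure)"
  shows "{p\<in>D. X (fst p) (snd p) \<in> B} \<in> Dec"
proof -
  interpret DS: sigma_algebra D Dec by (rule Dec_sa)
  define EE where "EE s A = {\<omega>\<in>space M. X s \<omega> \<in> A}" for s A
  have EEG: "EE s A \<in> G_filt M F \<tau> s" if "0 \<le> s" "A \<in> sets borel" for s A
    using ad that unfolding adapted_def EE_def by blast
  define u where "u n p = X (gn n (fst p)) (snd p)" for n p
  have um: "u n \<in> borel_measurable DM" for n
  proof (rule measurableI)
    fix A :: "real set" assume A: "A \<in> sets borel"
    have eq: "u n -` A \<inter> space DM = rect {0} (EE 0 A) \<union> (\<Union>k. rect {real k / 2^n<..(real k + 1) / 2^n} (EE (real k / 2^n) A))"
    proof (rule set_eqI)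
      fix p :: "real \<times> 'a"
      obtain t \<omega> where p: "p = (t, \<omega>)" by fastforce
      show "p \<in> u n -` A \<inter> space DM \<longleftrightarrow> p \<in> rect {0} (EE 0 A) \<union> (\<Union>k. rect {real k / 2^n<..(real k + 1) / 2^n} (EE (real k / 2^n) A))"
      proof (cases "(t, \<omega>) \<in> D")
        case False
        then show ?thesis unfolding p space_DM rect_def by auto
      next
        case True
        then have t: "0 \<le> t" and \<omega>: "\<omega> \<in> space M" by (auto simp: D_iff)
        show ?thesis
        proof (cases "t = 0")
          case True
          have "\<not> (real k / 2^n < 0)" for k :: nat by (simp add: not_less zero_le_divide_iff)
          then show ?thesis unfolding p space_DM rect_def EE_def u_def gn_def using True \<omega> t
            by (auto simp: D_iff)
        next
          case False
          then have t0: "0 < t" using t by simp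
          obtain k where k: "gn n t = real k / 2^n" using gn_ex[OF t0] by blast
          have "(\<exists>k'. t \<in> {real k' / 2^n<..(real k' + 1) / 2^n} \<and> X (real k' / 2^n) \<omega> \<in> A) \<longleftrightarrow> X (gn n t) \<omega> \<in> A"
          proof
            assume "\<exists>k'. t \<in> {real k' / 2^n<..(real k' + 1) / 2^n} \<and> X (real k' / 2^n) \<omega> \<in> A"
            then obtain k' where "t \<in> {real k' / 2^n<..(real k' + 1) / 2^n}" "X (real k' / 2^n) \<omega> \<in> A" by blast
            then show "X (gn n t) \<omega> \<in> A" using gn_interval[OF t0, of n k'] by auto
          next
            assume "X (gn n t) \<omega> \<in> A"
            then show "\<exists>k'. t \<in> {real k' / 2^n<..(real k' + 1) / 2^n} \<and> X (real k' / 2^n) \<omega> \<in> A"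
              using k gn_interval[OF t0, of n k] by (intro exI[of _ k]) auto
          qed
          then show ?thesis unfolding p space_DM rect_def EE_def u_def using False \<omega> t
            by (auto simp: D_iff)
        qed
      qed
    qed
    have "rect {0} (EE 0 A) \<in> Dec" by (rule dec_zero[OF EEG[OF _ A]]) simp
    moreover have "rect {real k / 2^n<..(real k + 1) / 2^n} (EE (real k / 2^n) A) \<in> Dec" for k
      by (rule dec_interval) (auto intro: EEG[OF _ A])
    ultimately show "u n -` A \<inter> space DM \<in> sets DM" unfolding eq sets_DM
      by (intro DS.Un DS.countable_nat_UN) auto
  qed auto
  have conv: "(\<lambda>n. u n p) \<longlonglongrightarrow> X (fst p) (snd p)" if p: "p \<in> space DM" for p
  proof -
    obtain t \<omega> where pp: "p = (t, \<omega>)" by fastforce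
    have t: "0 \<le> t" and \<omega>: "\<omega> \<in> space M" using p unfolding pp space_DM by (auto simp: D_iff)
    show ?thesis
    proof (cases "t = 0")
      case True
      then show ?thesis unfolding pp u_def gn_def by simp
    next
      case False
      then have t0: "0 < t" using t by simp
      have "continuous (at_left t) (\<lambda>s. X s \<omega>)" using lc \<omega> t0 unfolding left_cont_paths_def by blast
      then have "((\<lambda>s. X s \<omega>) \<longlongrightarrow> X t \<omega>) (at_left t)" unfolding continuous_within by simp
      from filterlim_compose[OF this gn_lim[OF t0]] show ?thesis unfolding pp u_def by simp
    qed
  qed
  have "(\<lambda>p. X (fst p) (snd p)) \<in> borel_measurable DM"
    by (rule borel_measurable_LIMSEQ_real[OF conv um])
  from measurable_sets[OF this B] have "(\<lambda>p. X (fst p) (snd p)) -` B \<inter> space DM \<in> sets DM" .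
  moreover have "(\<lambda>p. X (fst p) (snd p)) -` B \<inter> space DM = {p\<in>D. X (fst p) (snd p) \<in> B}"
    unfolding space_DM by auto
  ultimately show ?thesis unfolding sets_DM by simp
qed

lemma pred_Dec: "predictable_sigma M (G_filt M F \<tau>) \<subseteq> Dec"
  unfolding predictable_sigma_def proc_sigma_def
proof (rule sigma_algebra.sigma_sets_subset[OF Dec_sa])
  show "{{p \<in> D. X (fst p) (snd p) \<in> B} |X B. X \<in> {X. adapted M (G_filt M F \<tau>) X \<and> left_cont_paths M X} \<and> B \<in> sets borel} \<subseteq> Dec"
    using lc_gen by blast
qed

end

context setting begin

definition "OM = measure_of D OS (\<lambda>_. 0)"
definition "BM = measure_of ({0..} \<times> D) BOS (\<lambda>_. 0)"
lemma sets_OM: "sets OM = OS" unfolding OM_def by (rule sigma_algebra.sets_measure_of_eq[OF OS_sa])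
lemma space_OM: "space OM = D" unfolding OM_def by (rule space_measure_of_conv)
lemma sets_BM: "sets BM = BOS" unfolding BM_def by (rule sigma_algebra.sets_measure_of_eq[OF BOS_sa])
lemma space_BM: "space BM = {0..} \<times> D" unfolding BM_def by (rule space_measure_of_conv)

lemma sum_level:
  assumes "finite R" "v \<in> R"
  shows "(\<Sum>x\<in>R. x * indicator {p. g p = x} q) = (if g q \<in> R then g q else (0::real))"
proof -
  have "(\<Sum>x\<in>R. x * indicator {p. g p = x} q) = (\<Sum>x\<in>R. if x = g q then x else 0)"
    by (rule sum.cong) (auto simp: indicator_def)
  also have "\<dots> = (if g q \<in> R then g q else 0)" using assms(1) by (simp add: sum.delta')
  finally show ?thesis .
qed

lemma simple_dec:
  fixes s :: "real \<times> 'a \<Rightarrow> real"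
  assumes s: "simple_function DM s"
  shows "\<exists>s' s'' Z. s' \<in> borel_measurable OM \<and> s'' \<in> borel_measurable BM \<and> gnull Z \<and>
    (\<forall>\<omega>\<in>space M - Z. \<forall>t\<ge>0. s (t,\<omega>) = (if ereal t < \<tau> \<omega> then s' (t,\<omega>) else s'' (\<tau> \<omega>, (t,\<omega>))))"
proof -
  define R where "R = s ` D"
  have R: "finite R" using s unfolding simple_function_def R_def space_DM by auto
  define L where "L x = s -` {x} \<inter> D" for x
  have LD: "L x \<in> Dec" if "x \<in> R" for x
    using s that unfolding simple_function_def R_def L_def space_DM sets_DM by auto
  have "\<forall>x. \<exists>A' A'' Z. x \<in> R \<longrightarrow> (A' \<in> OS \<and> A'' \<in> BOS \<and> gnull Z \<and> dcond (L x) A' A'' Z)"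
  proof
    fix x show "\<exists>A' A'' Z. x \<in> R \<longrightarrow> (A' \<in> OS \<and> A'' \<in> BOS \<and> gnull Z \<and> dcond (L x) A' A'' Z)"
    proof (cases "x \<in> R")
      case True
      then have "dec (L x)" using LD unfolding Dec_def by blast
      then show ?thesis unfolding dec_iff by blast
    qed blast
  qed
  then obtain A' A'' Z where AA: "\<And>x. x \<in> R \<Longrightarrow> A' x \<in> OS \<and> A'' x \<in> BOS \<and> gnull (Z x) \<and> dcond (L x) (A' x) (A'' x) (Z x)"
    by metis
  define s' where "s' p = (\<Sum>x\<in>R. x * indicator (A' x) p)" for p
  define s'' where "s'' q = (\<Sum>x\<in>R. x * indicator (A'' x) q)" for q
  have "s' \<in> borel_measurable OM" unfolding s'_def
    using AA by (intro borel_measurable_sum borel_measurable_times borel_measurable_const borel_measurable_indicator) (auto simp: sets_OM)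
  moreover have "s'' \<in> borel_measurable BM" unfolding s''_def
    using AA by (intro borel_measurable_sum borel_measurable_times borel_measurable_const borel_measurable_indicator) (auto simp: sets_BM)
  moreover have "gnull (\<Union>x\<in>R. Z x)" using AA R by (intro gnull_finite_UN) auto
  moreover have "\<forall>\<omega>\<in>space M - (\<Union>x\<in>R. Z x). \<forall>t\<ge>0. s (t,\<omega>) = (if ereal t < \<tau> \<omega> then s' (t,\<omega>) else s'' (\<tau> \<omega>, (t,\<omega>)))"
  proof (intro ballI allI impI)
    fix \<omega> and t :: real assume \<omega>: "\<omega> \<in> space M - (\<Union>x\<in>R. Z x)" and t: "0 \<le> t"
    have pD: "(t, \<omega>) \<in> D" using \<omega> t by (auto simp: D_iff)
    then have sR: "s (t, \<omega>) \<in> R" unfolding R_def by auto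
    have key: "(t,\<omega>)\<in>L x \<longleftrightarrow> (if ereal t < \<tau> \<omega> then (t,\<omega>)\<in>A' x else (\<tau> \<omega>,(t,\<omega>))\<in>A'' x)" if x: "x \<in> R" for x
    proof -
      have "dcond (L x) (A' x) (A'' x) (Z x)" using AA[OF x] by blast
      moreover have "\<omega> \<in> space M - Z x" using \<omega> x by blast
      ultimately show ?thesis unfolding dcond_def using t by blast
    qed
    have Lind: "indicator (L x) (t, \<omega>) = (indicator {p. s p = x} (t, \<omega>) :: real)" for x
      using pD unfolding L_def by (auto simp: indicator_def)
    have sumL: "(\<Sum>x\<in>R. x * indicator (L x) (t, \<omega>)) = s (t, \<omega>)"
      unfolding Lind using sum_level[OF R sR, of s "(t, \<omega>)"] sR by simp
    show "s (t,\<omega>) = (if ereal t < \<tau> \<omega> then s' (t,\<omega>) else s'' (\<tau> \<omega>, (t,\<omega>)))"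
    proof (cases "ereal t < \<tau> \<omega>")
      case True
      have "s' (t, \<omega>) = (\<Sum>x\<in>R. x * indicator (L x) (t, \<omega>))" unfolding s'_def
        by (rule sum.cong) (use key True in \<open>auto simp: indicator_def\<close>)
      then show ?thesis using True sumL by simp
    next
      case False
      have "s'' (\<tau> \<omega>, (t, \<omega>)) = (\<Sum>x\<in>R. x * indicator (L x) (t, \<omega>))" unfolding s''_def
        by (rule sum.cong) (use key False in \<open>auto simp: indicator_def\<close>)
      then show ?thesis using False sumL by simp
    qed
  qed
  ultimately show ?thesis by blast
qed

lemma main:
  assumes Y: "proc_measurable M (predictable_sigma M (G_filt M F \<tau>)) Y"
  shows "\<exists>Y' Y''. proc_measurable M (optional_sigma M F) Y' \<and> param_measurable M F Y'' \<and>
     (\<exists>Z. Z \<in> N_tau M F \<tau> \<and> (\<exists>B\<in>sets M. measure M B = 0 \<and> Z \<subseteq> B) \<and>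
        (\<forall>\<omega>\<in>space M - Z. \<forall>t\<ge>0.
           Y t \<omega> = (if ereal t < \<tau> \<omega> then Y' t \<omega> else Y'' (\<tau> \<omega>) t \<omega>)))"
proof -
  define f where "f p = Y (fst p) (snd p)" for p
  have fm: "f \<in> borel_measurable DM"
  proof (rule measurableI)
    fix B :: "real set" assume B: "B \<in> sets borel"
    have "f -` B \<inter> space DM = {p\<in>D. Y (fst p) (snd p) \<in> B}" unfolding f_def space_DM by auto
    also have "\<dots> \<in> Dec" using Y B pred_Dec unfolding proc_measurable_def by blast
    finally show "f -` B \<inter> space DM \<in> sets DM" unfolding sets_DM .
  qed auto
  from borel_measurable_implies_sequence_metric[OF fm, of 0] obtain S where
    S: "\<And>i. simple_function DM (S i)" "\<And>x. x \<in> space DM \<Longrightarrow> (\<lambda>i. S i x) \<longlonglongrightarrow> f x" by blast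
  have "\<forall>i. \<exists>s' s'' Z. s' \<in> borel_measurable OM \<and> s'' \<in> borel_measurable BM \<and> gnull Z \<and>
    (\<forall>\<omega>\<in>space M - Z. \<forall>t\<ge>0. S i (t,\<omega>) = (if ereal t < \<tau> \<omega> then s' (t,\<omega>) else s'' (\<tau> \<omega>, (t,\<omega>))))"
    using simple_dec[OF S(1)] by blast
  then obtain s' s'' Z where SS: "\<And>i. s' i \<in> borel_measurable OM \<and> s'' i \<in> borel_measurable BM \<and> gnull (Z i) \<and>
    (\<forall>\<omega>\<in>space M - Z i. \<forall>t\<ge>0. S i (t,\<omega>) = (if ereal t < \<tau> \<omega> then s' i (t,\<omega>) else s'' i (\<tau> \<omega>, (t,\<omega>))))"
    by metis
  define Y' where "Y' t \<omega> = lim (\<lambda>i. s' i (t, \<omega>))" for t \<omega>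
  define Y'' where "Y'' u t \<omega> = lim (\<lambda>i. s'' i (u, (t, \<omega>)))" for u t \<omega>
  have m1: "(\<lambda>p. lim (\<lambda>i. s' i p)) \<in> borel_measurable OM"
    using SS by (intro borel_measurable_lim_metric) blast
  have m2: "(\<lambda>q. lim (\<lambda>i. s'' i q)) \<in> borel_measurable BM"
    using SS by (intro borel_measurable_lim_metric) blast
  have P1: "proc_measurable M (optional_sigma M F) Y'" unfolding proc_measurable_def
  proof
    fix B :: "real set" assume B: "B \<in> sets borel"
    have "{p\<in>D. Y' (fst p) (snd p) \<in> B} = (\<lambda>p. lim (\<lambda>i. s' i p)) -` B \<inter> space OM"
      unfolding Y'_def space_OM by auto
    also have "\<dots> \<in> OS" using measurable_sets[OF m1 B] unfolding sets_OM .
    finally show "{p\<in>D. Y' (fst p) (snd p) \<in> B} \<in> OS" .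
  qed
  have P2: "param_measurable M F Y''" unfolding param_measurable_def
  proof
    fix B :: "real set" assume B: "B \<in> sets borel"
    have "{q\<in>{0..} \<times> D. Y'' (fst q) (fst (snd q)) (snd (snd q)) \<in> B} = (\<lambda>q. lim (\<lambda>i. s'' i q)) -` B \<inter> space BM"
      unfolding Y''_def space_BM by auto
    also have "\<dots> \<in> BOS" using measurable_sets[OF m2 B] unfolding sets_BM .
    finally show "{q\<in>{0..} \<times> D. Y'' (fst q) (fst (snd q)) (snd (snd q)) \<in> B} \<in> BOS" .
  qed
  have gz: "gnull (\<Union>i. Z i)" using SS by (intro gnull_UN) blast
  have P3: "\<forall>\<omega>\<in>space M - (\<Union>i. Z i). \<forall>t\<ge>0. Y t \<omega> = (if ereal t < \<tau> \<omega> then Y' t \<omega> else Y'' (\<tau> \<omega>) t \<omega>)"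
  proof (intro ballI allI impI)
    fix \<omega> and t :: real assume \<omega>: "\<omega> \<in> space M - (\<Union>i. Z i)" and t: "0 \<le> t"
    have pD: "(t, \<omega>) \<in> space DM" using \<omega> t by (auto simp: D_iff space_DM)
    have lim: "(\<lambda>i. S i (t, \<omega>)) \<longlonglongrightarrow> Y t \<omega>" using S(2)[OF pD] unfolding f_def by simp
    have eq: "S i (t,\<omega>) = (if ereal t < \<tau> \<omega> then s' i (t,\<omega>) else s'' i (\<tau> \<omega>, (t,\<omega>)))" for i
    proof -
      have "\<omega> \<in> space M - Z i" using \<omega> by blast
      then show ?thesis using SS[of i] t by blast
    qed
    show "Y t \<omega> = (if ereal t < \<tau> \<omega> then Y' t \<omega> else Y'' (\<tau> \<omega>) t \<omega>)"
    proof (cases "ereal t < \<tau> \<omega>")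
      case True
      then have "(\<lambda>i. s' i (t, \<omega>)) \<longlonglongrightarrow> Y t \<omega>" using lim eq by simp
      then show ?thesis using True unfolding Y'_def by (simp add: limI)
    next
      case False
      then have "(\<lambda>i. s'' i (\<tau> \<omega>, (t, \<omega>))) \<longlonglongrightarrow> Y t \<omega>" using lim eq by simp
      then show ?thesis using False unfolding Y''_def by (simp add: limI)
    qed
  qed
  from gnull_final[OF gz] P1 P2 P3 show ?thesis by blast
qed

end

theorem mainTheorem3:
  fixes M :: "'a measure" and F :: "real \<Rightarrow> 'a set set" and \<tau> :: "'a \<Rightarrow> ereal"
    and Y :: "real \<Rightarrow> 'a \<Rightarrow> real"
  assumes "prob_space M"
    and "filtration M F"
    and "right_continuous_filtration F"
    and "null_sigma M (filt_infty M F) \<subseteq> F 0"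
    and "\<tau> \<in> borel_measurable M"
    and "\<forall>\<omega>\<in>space M. 0 \<le> \<tau> \<omega>"
    and "proc_measurable M (predictable_sigma M (G_filt M F \<tau>)) Y"
  shows "\<exists>Y' Y''. proc_measurable M (optional_sigma M F) Y' \<and> param_measurable M F Y'' \<and>
     (\<exists>Z. Z \<in> N_tau M F \<tau> \<and> (\<exists>B\<in>sets M. measure M B = 0 \<and> Z \<subseteq> B) \<and>
        (\<forall>\<omega>\<in>space M - Z. \<forall>t\<ge>0.
           Y t \<omega> = (if ereal t < \<tau> \<omega> then Y' t \<omega> else Y'' (\<tau> \<omega>) t \<omega>)))"
proof -
  interpret setting M F \<tau>
    using assms(1,2,3,5,6) by (rule setting.intro)
  show ?thesis by (rule main[OF assms(7)])
qed


end
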